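(* Let $d\ge2$, $n=2$, and $\mathcal T=\sum_{k=1}^3\mathbf v_k^{\otimes d}$. (i) If $d\in\{2,4\}$, every $\mathbf v\in\mathbb R^2$ with $\|\mathbf v\|=1$ is an eigenvector of $\mathcal T$, with eigenvalue $\mu=\frac32$ if $d=2$ and $\mu=\frac98$ if $d=4$. (ii) If $d\ge6$ is even, the normalized eigenpairs of $\mathcal T$ are exactly the $12$ pairs $(\pm\mathbf v_k,\,1+2^{1-d})$, $1\le k\le3$, and $\big((\mathbf v_k+2\mathbf v_j)/\sqrt3,\,3^{d/2}2^{1-d}\big)$, $1\le k\ne j\le3$. (iii) If $d\ge3$ is odd, the normalized eigenpairs of $\mathcal T$ are exactly the $6$ pairs $(\mathbf v_k,\,1-2^{1-d})$ and $(-\mathbf v_k,\,-(1-2^{1-d}))$, $1\le k\le3$.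
   Context: For $n=2$ the simplex frame is $\mathbf v_1=(1,0)^\top$, $\mathbf v_2=(-\frac12,\frac{\sqrt3}2)^\top$, $\mathbf v_3=(-\frac12,-\frac{\sqrt3}2)^\top$ (unit vectors with pairwise inner product $-\frac12$ and sum $\mathbf 0$; up to an orthogonal transformation this is the general definition $\mathbf v_k=\sqrt{1+\frac1n}\mathbf e_k-n^{-3/2}(\sqrt{n+1}-1)\mathbf 1_n$, $\mathbf v_{n+1}=-n^{-1/2}\mathbf 1_n$). $\mathcal T\cdot\mathbf v^{d-1}=\sum_{k=1}^3\langle\mathbf v,\mathbf v_k\rangle^{d-1}\mathbf v_k$. A normalized eigenpair is $(\mathbf v,\mu)$ with $\|\mathbf v\|=1$ and $\mathcal T\cdot\mathbf v^{d-1}=\mu\mathbf v$. *)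

theory Defs
  imports "HOL-Analysis.Analysis"
begin

definition sv :: "nat \<Rightarrow> real^2" where
  "sv k = (if k = 1 then vector [1, 0]
           else if k = 2 then vector [-1/2, sqrt 3 / 2]
           else vector [-1/2, - sqrt 3 / 2])"

text \<open>The tensor T = sum_k v_k^{\<otimes> d} applied to v^{d-1}.\<close>
definition Tapply :: "nat \<Rightarrow> real^2 \<Rightarrow> real^2" where
  "Tapply d v = (\<Sum>k\<in>{1..3}. (v \<bullet> sv k) ^ (d - 1) *\<^sub>R sv k)"

definition is_eigenpair :: "nat \<Rightarrow> real^2 \<Rightarrow> real \<Rightarrow> bool" where
  "is_eigenpair d v \<mu> \<longleftrightarrow> Tapply d v = \<mu> *\<^sub>R v"

definition normalized_eigenpairs :: "nat \<Rightarrow> ((real^2) \<times> real) set" where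
  "normalized_eigenpairs d = {(v, \<mu>). norm v = 1 \<and> is_eigenpair d v \<mu>}"

end

theory Submission
  imports Defs
begin

definition P :: "real \<Rightarrow> real \<Rightarrow> real^2" where "P x y = vector [x, y]"

lemma P_nth[simp]: "P x y $ 1 = x" "P x y $ 2 = y"
  by (simp_all add: P_def)

lemma vec_P: "v = P (v$1) (v$2)"
  by (simp add: vec_eq_iff forall_2)

lemma P_eq[simp]: "P a b = P c d \<longleftrightarrow> a = c \<and> b = d"
  by (auto simp: vec_eq_iff forall_2)

lemma P_inner[simp]: "P a b \<bullet> P c d = a*c + b*d"
  by (simp add: inner_vec_def sum_2)

lemma P_scaleR[simp]: "r *\<^sub>R P a b = P (r*a) (r*b)"
  by (simp add: vec_eq_iff forall_2)

lemma P_add[simp]: "P a b + P c d = P (a+c) (b+d)"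
  by (simp add: vec_eq_iff forall_2)

lemma P_minus[simp]: "- P a b = P (-a) (-b)"
  by (simp add: vec_eq_iff forall_2)

lemma norm_P: "norm (P a b) = 1 \<longleftrightarrow> a^2 + b^2 = 1"
  by (simp add: norm_eq_1 power2_eq_square)

lemma sv_P: "sv (Suc 0) = P 1 0" "sv 1 = P 1 0" "sv 2 = P (-1/2) (sqrt 3/2)" "sv 3 = P (-1/2) (-sqrt 3/2)"
  by (simp_all add: sv_def P_def)

lemma Tapply_P: "Tapply d (P x y) =
   P (x^(d-1) - (-x/2 + sqrt 3/2*y)^(d-1)/2 - (-x/2 - sqrt 3/2*y)^(d-1)/2)
     (sqrt 3/2 * ((-x/2 + sqrt 3/2*y)^(d-1) - (-x/2 - sqrt 3/2*y)^(d-1)))"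
proof -
  have "{1..3::nat} = {1,2,3}" by auto
  then show ?thesis unfolding Tapply_def by (simp add: sv_P field_simps)
qed

fun g :: "real \<Rightarrow> real \<Rightarrow> nat \<Rightarrow> real" where
  "g p q 0 = 0"
| "g p q (Suc 0) = 0"
| "g p q (Suc (Suc 0)) = 1"
| "g p q (Suc (Suc (Suc n))) = p * g p q (Suc n) + q * g p q n"

lemma pw: "t^3 = p*t + (q::real) \<Longrightarrow> t^(Suc (Suc (Suc n))) = p * t^(Suc n) + q * t^n"
proof -
  assume h: "t^3 = p*t + q"
  have "t^(Suc (Suc (Suc n))) = t^3 * t^n" by (simp add: power3_eq_cube)
  also have "\<dots> = p * t^(Suc n) + q * t^n" unfolding h by (simp add: algebra_simps)
  finally show ?thesis .
qed

lemma S_eq: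
  assumes "a + b + c = (0::real)"
  shows "a^n*(c-b)+b^n*(a-c)+c^n*(b-a) = (a-b)*(b-c)*(c-a) * g (-(a*b+b*c+c*a)) (a*b*c) n"
proof (induction n rule: less_induct)
  case (less n)
  show ?case
  proof (cases n)
    case 0 then show ?thesis by simp
  next
    case (Suc n1)
    show ?thesis
    proof (cases n1)
      case 0 with Suc show ?thesis by (simp add: algebra_simps)
    next
      case (Suc n2)
      show ?thesis
      proof (cases n2)
        case 0 with Suc \<open>n = Suc n1\<close> show ?thesis by (simp add: algebra_simps power2_eq_square)
      next
        case (Suc k)
        have n: "n = Suc (Suc (Suc k))" using \<open>n = Suc n1\<close> \<open>n1 = Suc n2\<close> Suc by simp
        let ?p = "-(a*b+b*c+c*a)" and ?q = "a*b*c"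
        have IH1: "a^(Suc k)*(c-b)+b^(Suc k)*(a-c)+c^(Suc k)*(b-a) = (a-b)*(b-c)*(c-a) * g ?p ?q (Suc k)"
          using less.IH[of "Suc k"] n by simp
        have IH2: "a^k*(c-b)+b^k*(a-c)+c^k*(b-a) = (a-b)*(b-c)*(c-a) * g ?p ?q k"
          using less.IH[of k] n by simp
        have ha: "a^3 = ?p * a + ?q" using assms(1) by algebra
        have hb: "b^3 = ?p * b + ?q" using assms(1) by algebra
        have hc: "c^3 = ?p * c + ?q" using assms(1) by algebra
        have "a^n*(c-b)+b^n*(a-c)+c^n*(b-a) =
           ?p * (a^(Suc k)*(c-b)+b^(Suc k)*(a-c)+c^(Suc k)*(b-a)) + ?q * (a^k*(c-b)+b^k*(a-c)+c^k*(b-a))"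
          unfolding n pw[OF ha] pw[OF hb] pw[OF hc] by (simp add: algebra_simps)
        also have "\<dots> = (a-b)*(b-c)*(c-a) * g ?p ?q n"
          unfolding IH1 IH2 n by (simp add: algebra_simps)
        finally show ?thesis .
      qed
    qed
  qed
qed

lemma g_pos: "p > 0 \<Longrightarrow> q > 0 \<Longrightarrow> g p q n \<ge> 0 \<and> (n \<ge> 2 \<and> n \<noteq> 3 \<longrightarrow> g p q n > 0)"
proof (induction p q n rule: g.induct)
  case (4 p q n)
  have n0: "g p q n \<ge> 0" and n1: "g p q (Suc n) \<ge> 0" using 4 by auto
  have A: "g p q (Suc (Suc (Suc n))) \<ge> 0" using n0 n1 4(3,4) by simp
  have B: "g p q (Suc (Suc (Suc n))) > 0" if "n \<ge> 1"
  proof (cases "n = 2")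
    case True
    then show ?thesis using 4(3,4) n1 by (simp add: numeral_eq_Suc add_nonneg_pos)
  next
    case False
    then have "g p q (Suc n) > 0" using 4 that by auto
    then show ?thesis using 4(3,4) n0 by (simp add: add_pos_nonneg)
  qed
  show ?case using A B by auto
qed auto

lemma g_neg: "g p (-q) n = (-1)^n * g p q n"
  by (induction p q n rule: g.induct) (auto simp: algebra_simps)

lemma g_zero: "p > 0 \<Longrightarrow> g p 0 n = 0 \<longleftrightarrow> (odd n \<or> n = 0)"
  by (induction p "0::real" n rule: g.induct) auto

lemma g_eq0:
  assumes "p > 0" "n = 2 \<or> n \<ge> 4"
  shows "g p q n = 0 \<longleftrightarrow> q = 0 \<and> odd n"
proof (cases q "0::real" rule: linorder_cases)
  case less
  have "g p (-q) n > 0" using g_pos[of p "-q" n] assms less by auto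
  then show ?thesis using less g_neg[of p "-q" n] by auto
next
  case equal then show ?thesis using g_zero[OF assms(1)] assms by auto
next
  case greater
  have "g p q n > 0" using g_pos[of p q n] assms greater by auto
  then show ?thesis using greater by auto
qed

lemma rot:
  assumes "x^2 + y^2 = (1::real)"
  shows "(T1 = \<mu> * x \<and> T2 = \<mu> * y) \<longleftrightarrow> (\<mu> = x*T1 + y*T2 \<and> x*T2 - y*T1 = 0)"
proof
  assume h: "T1 = \<mu> * x \<and> T2 = \<mu> * y"
  then show "\<mu> = x*T1 + y*T2 \<and> x*T2 - y*T1 = 0" using assms
    by (auto simp: algebra_simps power2_eq_square) (metis distrib_left mult.right_neutral)
next
  assume h: "\<mu> = x*T1 + y*T2 \<and> x*T2 - y*T1 = 0"
  then show "T1 = \<mu> * x \<and> T2 = \<mu> * y" using assms by algebra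
qed

definition bb :: "real \<Rightarrow> real \<Rightarrow> real" where "bb x y = -x/2 + sqrt 3/2*y"
definition cc :: "real \<Rightarrow> real \<Rightarrow> real" where "cc x y = -x/2 - sqrt 3/2*y"

lemma eig_iff:
  assumes "x^2 + y^2 = 1" "d \<ge> 1"
  shows "Tapply d (P x y) = \<mu> *\<^sub>R P x y \<longleftrightarrow>
     \<mu> = x^d + bb x y^d + cc x y^d \<and>
     x^(d-1)*(cc x y - bb x y) + bb x y^(d-1)*(x - cc x y) + cc x y^(d-1)*(bb x y - x) = 0"
proof -
  obtain m where d: "d = Suc m" using assms(2) by (cases d) auto
  define b where "b = bb x y"
  define c where "c = cc x y"
  define s where "s = sqrt 3"
  have s2: "s * s = 3" unfolding s_def by simp
  have s0: "s \<noteq> 0" unfolding s_def by simp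
  define T1 where "T1 = x^m - b^m/2 - c^m/2"
  define T2 where "T2 = s/2 * (b^m - c^m)"
  have T: "Tapply d (P x y) = P T1 T2"
    unfolding Tapply_P T1_def T2_def b_def c_def bb_def cc_def d s_def by simp
  have e1: "x*T1 + y*T2 = x^d + b^d + c^d"
  proof -
    have "x*T1 + y*T2 = x * x^m + b^m * (-x/2 + s/2*y) + c^m * (-x/2 - s/2*y)"
      unfolding T1_def T2_def by (simp add: algebra_simps)
    then show ?thesis unfolding d b_def c_def bb_def cc_def s_def by (simp add: algebra_simps)
  qed
  have e2: "s * (x*T2 - y*T1) = x^m*(c - b) + b^m*(x - c) + c^m*(b - x)"
  proof -
    have "s * (x*T2 - y*T1) = x^m*(-s*y) + b^m*((s * s)/2*x + s/2*y) + c^m*(-((s * s)/2*x)+s/2*y)"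
      unfolding T1_def T2_def by (simp add: field_simps)
    also have "\<dots> = x^m*(c - b) + b^m*(x - c) + c^m*(b - x)"
      unfolding s2 b_def c_def bb_def cc_def s_def[symmetric] by (simp add: algebra_simps)
    finally show ?thesis .
  qed
  have "Tapply d (P x y) = \<mu> *\<^sub>R P x y \<longleftrightarrow> (T1 = \<mu> * x \<and> T2 = \<mu> * y)"
    unfolding T by (simp add: mult.commute)
  also have "\<dots> \<longleftrightarrow> (\<mu> = x*T1 + y*T2 \<and> x*T2 - y*T1 = 0)" by (rule rot[OF assms(1)])
  also have "\<dots> \<longleftrightarrow> (\<mu> = x^d + b^d + c^d \<and> x^m*(c - b) + b^m*(x - c) + c^m*(b - x) = 0)"
    using e1 e2 s0 by (metis mult_eq_0_iff)
  finally show ?thesis unfolding b_def c_def d by simp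
qed

lemma sq_half: "(x::real)^2 = 1/4 \<longleftrightarrow> x = 1/2 \<or> x = -1/2"
proof -
  have "x^2 = 1/4 \<longleftrightarrow> (x - 1/2) * (x + 1/2) = 0" by (simp add: algebra_simps power2_eq_square)
  then show ?thesis by auto
qed

lemma sq_one: "(x::real)^2 = 1 \<longleftrightarrow> x = 1 \<or> x = -1"
  by (metis power2_eq_1_iff)

lemma s3: "sqrt 3 * sqrt 3 = (3::real)" "sqrt 3 ^ 2 = (3::real)" by simp_all

lemma lin_s: "(u::real) * sqrt 3 = v \<longleftrightarrow> u = v * sqrt 3 / 3"
proof -
  have "u * sqrt 3 = v \<longleftrightarrow> u * sqrt 3 * sqrt 3 = v * sqrt 3"
    by (metis mult_cancel_right real_sqrt_eq_zero_cancel_iff zero_neq_numeral)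
  also have "\<dots> \<longleftrightarrow> u = v * sqrt 3 / 3" by (simp add: mult.assoc s3)
  finally show ?thesis .
qed

lemma xb0: "x - bb x y = 0 \<longleftrightarrow> y = sqrt 3 * x"
proof -
  have "x - bb x y = 0 \<longleftrightarrow> y * sqrt 3 = 3 * x" unfolding bb_def by (auto simp: algebra_simps)
  also have "\<dots> \<longleftrightarrow> y = sqrt 3 * x" by (auto simp add: lin_s mult.commute)
  finally show ?thesis .
qed

lemma cx0: "cc x y - x = 0 \<longleftrightarrow> y = - sqrt 3 * x"
proof -
  have "cc x y - x = 0 \<longleftrightarrow> y * sqrt 3 = - 3 * x" unfolding cc_def by (auto simp: algebra_simps)
  also have "\<dots> \<longleftrightarrow> y = - sqrt 3 * x" by (auto simp add: lin_s mult.commute)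
  finally show ?thesis .
qed

lemma bc0: "bb x y - cc x y = 0 \<longleftrightarrow> y = 0"
  unfolding bb_def cc_def by auto

lemma b0: "bb x y = 0 \<longleftrightarrow> x = sqrt 3 * y"
proof -
  have "bb x y = 0 \<longleftrightarrow> y * sqrt 3 = x" unfolding bb_def by (auto simp: algebra_simps)
  also have "\<dots> \<longleftrightarrow> x = sqrt 3 * y" by auto
  finally show ?thesis .
qed

lemma c0: "cc x y = 0 \<longleftrightarrow> x = - sqrt 3 * y"
proof -
  have "cc x y = 0 \<longleftrightarrow> y * sqrt 3 = -x" unfolding cc_def by (auto simp: algebra_simps)
  also have "\<dots> \<longleftrightarrow> x = - sqrt 3 * y" by (auto simp: algebra_simps)
  finally show ?thesis .
qed

lemma V_sol:
  assumes "x^2 + y^2 = 1"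
  shows "(x - bb x y)*(bb x y - cc x y)*(cc x y - x) = 0 \<longleftrightarrow>
    (x = 1 \<and> y = 0) \<or> (x = -1 \<and> y = 0) \<or> (x = 1/2 \<and> y = sqrt 3/2) \<or> (x = -1/2 \<and> y = -sqrt 3/2)
    \<or> (x = 1/2 \<and> y = -sqrt 3/2) \<or> (x = -1/2 \<and> y = sqrt 3/2)" (is "_ \<longleftrightarrow> ?R")
proof -
  have "(x - bb x y)*(bb x y - cc x y)*(cc x y - x) = 0 \<longleftrightarrow>
        y = sqrt 3 * x \<or> y = 0 \<or> y = - sqrt 3 * x"
    using xb0 cx0 bc0 by auto
  also have "\<dots> \<longleftrightarrow> ?R"
  proof -
    have A: "y = sqrt 3 * x \<longleftrightarrow> (x = 1/2 \<and> y = sqrt 3/2) \<or> (x = -1/2 \<and> y = -sqrt 3/2)"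
    proof
      assume h: "y = sqrt 3 * x"
      then have "x^2 = 1/4" using assms by (simp add: power_mult_distrib)
      then show "(x = 1/2 \<and> y = sqrt 3/2) \<or> (x = -1/2 \<and> y = -sqrt 3/2)"
        using h sq_half by auto
    next
      assume "(x = 1/2 \<and> y = sqrt 3/2) \<or> (x = -1/2 \<and> y = -sqrt 3/2)"
      then show "y = sqrt 3 * x" by (elim disjE conjE; hypsubst_thin; simp)
    qed
    have B: "y = - sqrt 3 * x \<longleftrightarrow> (x = 1/2 \<and> y = -sqrt 3/2) \<or> (x = -1/2 \<and> y = sqrt 3/2)"
    proof
      assume h: "y = - sqrt 3 * x"
      then have "x^2 = 1/4" using assms by (simp add: power_mult_distrib)
      then show "(x = 1/2 \<and> y = -sqrt 3/2) \<or> (x = -1/2 \<and> y = sqrt 3/2)"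
        using h sq_half by auto
    next
      assume "(x = 1/2 \<and> y = -sqrt 3/2) \<or> (x = -1/2 \<and> y = sqrt 3/2)"
      then show "y = - sqrt 3 * x" by (elim disjE conjE; hypsubst_thin; simp)
    qed
    have C: "y = 0 \<longleftrightarrow> (x = 1 \<and> y = 0) \<or> (x = -1 \<and> y = 0)"
    proof
      assume h: "y = 0"
      then have "x^2 = 1" using assms by simp
      then show "(x = 1 \<and> y = 0) \<or> (x = -1 \<and> y = 0)" using h sq_one by blast
    qed auto
    show ?thesis using A B C by argo
  qed
  finally show ?thesis .
qed

lemma q_sol:
  assumes "x^2 + y^2 = 1"
  shows "x * bb x y * cc x y = 0 \<longleftrightarrow>
    (x = 0 \<and> y = 1) \<or> (x = 0 \<and> y = -1) \<or> (x = sqrt 3/2 \<and> y = 1/2) \<or> (x = -sqrt 3/2 \<and> y = -1/2)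
    \<or> (x = -sqrt 3/2 \<and> y = 1/2) \<or> (x = sqrt 3/2 \<and> y = -1/2)" (is "_ \<longleftrightarrow> ?R")
proof -
  have "x * bb x y * cc x y = 0 \<longleftrightarrow> x = 0 \<or> x = sqrt 3 * y \<or> x = - sqrt 3 * y"
    using b0 c0 by auto
  also have "\<dots> \<longleftrightarrow> ?R"
  proof -
    have A: "x = sqrt 3 * y \<longleftrightarrow> (x = sqrt 3/2 \<and> y = 1/2) \<or> (x = -sqrt 3/2 \<and> y = -1/2)"
    proof
      assume h: "x = sqrt 3 * y"
      then have "y^2 = 1/4" using assms by (simp add: power_mult_distrib)
      then show "(x = sqrt 3/2 \<and> y = 1/2) \<or> (x = -sqrt 3/2 \<and> y = -1/2)"
        using h sq_half by auto
    next
      assume "(x = sqrt 3/2 \<and> y = 1/2) \<or> (x = -sqrt 3/2 \<and> y = -1/2)"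
      then show "x = sqrt 3 * y" by (elim disjE conjE; hypsubst_thin; simp)
    qed
    have B: "x = - sqrt 3 * y \<longleftrightarrow> (x = -sqrt 3/2 \<and> y = 1/2) \<or> (x = sqrt 3/2 \<and> y = -1/2)"
    proof
      assume h: "x = - sqrt 3 * y"
      then have "y^2 = 1/4" using assms by (simp add: power_mult_distrib)
      then show "(x = -sqrt 3/2 \<and> y = 1/2) \<or> (x = sqrt 3/2 \<and> y = -1/2)"
        using h sq_half by auto
    next
      assume "(x = -sqrt 3/2 \<and> y = 1/2) \<or> (x = sqrt 3/2 \<and> y = -1/2)"
      then show "x = - sqrt 3 * y" by (elim disjE conjE; hypsubst_thin; simp)
    qed
    have C: "x = 0 \<longleftrightarrow> (x = 0 \<and> y = 1) \<or> (x = 0 \<and> y = -1)"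
    proof
      assume h: "x = 0"
      then have "y^2 = 1" using assms by simp
      then show "(x = 0 \<and> y = 1) \<or> (x = 0 \<and> y = -1)" using h sq_one by blast
    qed auto
    show ?thesis using A B C by argo
  qed
  finally show ?thesis .
qed

definition lam :: "nat \<Rightarrow> real \<Rightarrow> real \<Rightarrow> real" where
  "lam d x y = x^d + bb x y^d + cc x y^d"

lemma cls:
  assumes "x^2 + y^2 = 1" "d = 3 \<or> d \<ge> 5"
  shows "Tapply d (P x y) = \<mu> *\<^sub>R P x y \<longleftrightarrow>
     \<mu> = lam d x y \<and> ((x - bb x y)*(bb x y - cc x y)*(cc x y - x) = 0 \<or> (x * bb x y * cc x y = 0 \<and> even d))"
proof -
  have d1: "d \<ge> 1" using assms(2) by auto
  have sum0: "x + bb x y + cc x y = 0" unfolding bb_def cc_def by simp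
  have p: "-(x * bb x y + bb x y * cc x y + cc x y * x) = 3/4"
  proof -
    have "-(x * bb x y + bb x y * cc x y + cc x y * x) = 3/4 * (x^2 + y^2)"
      unfolding bb_def cc_def by (simp add: algebra_simps power2_eq_square)
    then show ?thesis using assms(1) by simp
  qed
  have S: "x^(d-1)*(cc x y - bb x y) + bb x y^(d-1)*(x - cc x y) + cc x y^(d-1)*(bb x y - x)
      = (x - bb x y)*(bb x y - cc x y)*(cc x y - x) * g (3/4) (x * bb x y * cc x y) (d-1)"
    using S_eq[OF sum0, of "d-1"] by (simp only: p)
  have G: "g (3/4) (x * bb x y * cc x y) (d-1) = 0 \<longleftrightarrow> x * bb x y * cc x y = 0 \<and> odd (d-1)"
    by (rule g_eq0) (use assms(2) in auto)
  have od: "odd (d-1) \<longleftrightarrow> even d" using d1 by (cases d) auto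
  show ?thesis unfolding eig_iff[OF assms(1) d1] S lam_def mult_eq_0_iff[of _ "g _ _ _"] G od by auto
qed

lemma pts:
  "bb 1 0 = -1/2" "cc 1 0 = -1/2" "bb (-1) 0 = 1/2" "cc (-1) 0 = 1/2"
  "bb (1/2) (sqrt 3/2) = 1/2" "cc (1/2) (sqrt 3/2) = -1"
  "bb (-1/2) (-sqrt 3/2) = -1/2" "cc (-1/2) (-sqrt 3/2) = 1"
  "bb (1/2) (-sqrt 3/2) = -1" "cc (1/2) (-sqrt 3/2) = 1/2"
  "bb (-1/2) (sqrt 3/2) = 1" "cc (-1/2) (sqrt 3/2) = -1/2"
  "bb 0 1 = sqrt 3/2" "cc 0 1 = -sqrt 3/2" "bb 0 (-1) = -sqrt 3/2" "cc 0 (-1) = sqrt 3/2"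
  "bb (sqrt 3/2) (1/2) = 0" "cc (sqrt 3/2) (1/2) = -sqrt 3/2"
  "bb (-sqrt 3/2) (-1/2) = 0" "cc (-sqrt 3/2) (-1/2) = sqrt 3/2"
  "bb (-sqrt 3/2) (1/2) = sqrt 3/2" "cc (-sqrt 3/2) (1/2) = 0"
  "bb (sqrt 3/2) (-1/2) = -sqrt 3/2" "cc (sqrt 3/2) (-1/2) = 0"
  by (simp_all add: bb_def cc_def field_simps)

lemma L1: "2 powr (1 - real d) = 2 * (1/2)^d"
  by (simp add: powr_diff powr_realpow power_one_over)

lemma L2: "3 powr (real d / 2) = sqrt 3 ^ d"
proof -
  have "3 powr (real d / 2) = (3 powr (1/2)) powr real d" by (simp add: powr_powr)
  also have "\<dots> = sqrt 3 ^ d" by (simp add: powr_half_sqrt powr_realpow)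
  finally show ?thesis .
qed

lemma mem_char:
  assumes "d = 3 \<or> d \<ge> 5"
  shows "(P x y, \<mu>) \<in> normalized_eigenpairs d \<longleftrightarrow> x^2 + y^2 = 1 \<and> \<mu> = lam d x y \<and>
     ((x - bb x y)*(bb x y - cc x y)*(cc x y - x) = 0 \<or> (x * bb x y * cc x y = 0 \<and> even d))"
  unfolding normalized_eigenpairs_def is_eigenpair_def using cls[OF _ assms] norm_P by auto

lemma lam_even:
  assumes "even d" "d > 0"
  shows "lam d 1 0 = 1 + 2 powr (1 - real d)" "lam d (-1) 0 = 1 + 2 powr (1 - real d)"
   "lam d (1/2) (sqrt 3/2) = 1 + 2 powr (1 - real d)" "lam d (-1/2) (-sqrt 3/2) = 1 + 2 powr (1 - real d)"
   "lam d (1/2) (-sqrt 3/2) = 1 + 2 powr (1 - real d)" "lam d (-1/2) (sqrt 3/2) = 1 + 2 powr (1 - real d)"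
   "lam d 0 1 = 3 powr (real d / 2) * 2 powr (1 - real d)" "lam d 0 (-1) = 3 powr (real d / 2) * 2 powr (1 - real d)"
   "lam d (sqrt 3/2) (1/2) = 3 powr (real d / 2) * 2 powr (1 - real d)"
   "lam d (-sqrt 3/2) (-1/2) = 3 powr (real d / 2) * 2 powr (1 - real d)"
   "lam d (-sqrt 3/2) (1/2) = 3 powr (real d / 2) * 2 powr (1 - real d)"
   "lam d (sqrt 3/2) (-1/2) = 3 powr (real d / 2) * 2 powr (1 - real d)"
  using assms unfolding lam_def pts L1 L2 by (simp_all add: power_divide power_0_left)

lemma lam_odd:
  assumes "odd d"
  shows "lam d 1 0 = 1 - 2 powr (1 - real d)" "lam d (-1) 0 = - (1 - 2 powr (1 - real d))"
   "lam d (1/2) (sqrt 3/2) = - (1 - 2 powr (1 - real d))" "lam d (-1/2) (-sqrt 3/2) = 1 - 2 powr (1 - real d)"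
   "lam d (1/2) (-sqrt 3/2) = - (1 - 2 powr (1 - real d))" "lam d (-1/2) (sqrt 3/2) = 1 - 2 powr (1 - real d)"
  using assms unfolding lam_def pts L1 L2 by (simp_all add: power_divide power_0_left)

definition PV :: "(real^2) set" where
  "PV = {P 1 0, P (-1) 0, P (1/2) (sqrt 3/2), P (-1/2) (-sqrt 3/2), P (1/2) (-sqrt 3/2), P (-1/2) (sqrt 3/2)}"
definition PQ :: "(real^2) set" where
  "PQ = {P 0 1, P 0 (-1), P (sqrt 3/2) (1/2), P (-sqrt 3/2) (-1/2), P (-sqrt 3/2) (1/2), P (sqrt 3/2) (-1/2)}"

lemma V_solP: "x^2 + y^2 = 1 \<Longrightarrow> (x - bb x y)*(bb x y - cc x y)*(cc x y - x) = 0 \<longleftrightarrow> P x y \<in> PV"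
  unfolding PV_def by (subst V_sol) (simp_all only: insert_iff empty_iff P_eq simp_thms)

lemma q_solP: "x^2 + y^2 = 1 \<Longrightarrow> x * bb x y * cc x y = 0 \<longleftrightarrow> P x y \<in> PQ"
  unfolding PQ_def by (subst q_sol) (simp_all only: insert_iff empty_iff P_eq simp_thms)

lemma unitV0: "v \<in> PV \<Longrightarrow> (v$1)^2 + (v$2)^2 = 1"
  unfolding PV_def by (auto simp: power2_eq_square)

lemma unitQ0: "v \<in> PQ \<Longrightarrow> (v$1)^2 + (v$2)^2 = 1"
  unfolding PQ_def by (auto simp: power2_eq_square)

lemma unitV: "P x y \<in> PV \<Longrightarrow> x^2 + y^2 = 1"
  using unitV0[of "P x y"] by simp

lemma unitQ: "P x y \<in> PQ \<Longrightarrow> x^2 + y^2 = 1"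
  using unitQ0[of "P x y"] by simp

lemma LHS_even:
  assumes "even d" "d \<ge> 6"
  shows "normalized_eigenpairs d = (\<lambda>v. (v, lam d (v$1) (v$2))) ` (PV \<union> PQ)"
proof (rule set_eqI)
  fix z :: "(real^2) \<times> real"
  obtain v \<mu> where z: "z = (v, \<mu>)" by (cases z)
  obtain x y where v: "v = P x y" using vec_P by blast
  have d: "d = 3 \<or> d \<ge> 5" using assms by auto
  have "z \<in> normalized_eigenpairs d \<longleftrightarrow> x^2 + y^2 = 1 \<and> \<mu> = lam d x y \<and>
     ((x - bb x y)*(bb x y - cc x y)*(cc x y - x) = 0 \<or> x * bb x y * cc x y = 0)"
    unfolding z v mem_char[OF d] using assms by simp
  also have "\<dots> \<longleftrightarrow> P x y \<in> PV \<union> PQ \<and> \<mu> = lam d x y"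
    using V_solP q_solP unitV unitQ by blast
  also have "\<dots> \<longleftrightarrow> z \<in> (\<lambda>v. (v, lam d (v$1) (v$2))) ` (PV \<union> PQ)"
    unfolding z v by auto
  finally show "z \<in> normalized_eigenpairs d \<longleftrightarrow> z \<in> (\<lambda>v. (v, lam d (v$1) (v$2))) ` (PV \<union> PQ)" .
qed

lemma LHS_odd:
  assumes "odd d" "d \<ge> 3"
  shows "normalized_eigenpairs d = (\<lambda>v. (v, lam d (v$1) (v$2))) ` PV"
proof (rule set_eqI)
  fix z :: "(real^2) \<times> real"
  obtain v \<mu> where z: "z = (v, \<mu>)" by (cases z)
  obtain x y where v: "v = P x y" using vec_P by blast
  have d: "d = 3 \<or> d \<ge> 5" using assms by presburger
  have "z \<in> normalized_eigenpairs d \<longleftrightarrow> x^2 + y^2 = 1 \<and> \<mu> = lam d x y \<and>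
     ((x - bb x y)*(bb x y - cc x y)*(cc x y - x) = 0)"
    unfolding z v mem_char[OF d] using assms by simp
  also have "\<dots> \<longleftrightarrow> P x y \<in> PV \<and> \<mu> = lam d x y"
    using V_solP unitV by blast
  also have "\<dots> \<longleftrightarrow> z \<in> (\<lambda>v. (v, lam d (v$1) (v$2))) ` PV"
    unfolding z v by auto
  finally show "z \<in> normalized_eigenpairs d \<longleftrightarrow> z \<in> (\<lambda>v. (v, lam d (v$1) (v$2))) ` PV" .
qed

lemma set1: "{f s k | s k. s \<in> {1, -1::real} \<and> k \<in> {1..3::nat}} = {f 1 1, f 1 2, f 1 3, f (-1) 1, f (-1) 2, f (-1) 3}"
proof -
  have k: "{1..3::nat} = {1,2,3}" by auto
  show ?thesis unfolding k by blast
qed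

lemma set2: "{f k j | k j. k \<in> {1..3::nat} \<and> j \<in> {1..3} \<and> k \<noteq> j} = {f 1 2, f 1 3, f 2 1, f 2 3, f 3 1, f 3 2}"
proof -
  have A: "{f k j | k j. k \<in> {1..3::nat} \<and> j \<in> {1..3} \<and> k \<noteq> j} = (\<lambda>(k,j). f k j) ` {(k,j). k \<in> {1..3::nat} \<and> j \<in> {1..3} \<and> k \<noteq> j}"
    by auto
  have B: "{(k,j). k \<in> {1..3::nat} \<and> j \<in> {1..3} \<and> k \<noteq> j} = {(1,2),(1,3),(2,1),(2,3),(3,1),(3,2)}"
    by auto
  show ?thesis unfolding A B by simp
qed

lemma set3: "{f k | k. k \<in> {1..3::nat}} = {f 1, f 2, f 3}"
proof -
  have k: "{1..3::nat} = {1,2,3}" by auto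
  show ?thesis unfolding k by blast
qed

lemma s3f: "sqrt 3 \<noteq> (1::real)" "sqrt 3 \<noteq> (2::real)" "sqrt 3 > (0::real)" "sqrt 3 \<noteq> (-1::real)"
  "sqrt 3 \<noteq> (-2::real)"
proof -
  show "sqrt 3 \<noteq> (2::real)"
  proof
    assume "sqrt 3 = (2::real)"
    then have "sqrt 3 ^ 2 = (2::real)^2" by simp
    then show False by simp
  qed
  show "sqrt 3 > (0::real)" by simp
  then show "sqrt 3 \<noteq> (-1::real)" "sqrt 3 \<noteq> (-2::real)" by linarith+
  show "sqrt 3 \<noteq> (1::real)" by simp
qed

lemma w6:
  "(1 / sqrt 3) *\<^sub>R (sv 1 + 2 *\<^sub>R sv 2) = P 0 1"
  "(1 / sqrt 3) *\<^sub>R (sv 1 + 2 *\<^sub>R sv 3) = P 0 (-1)"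
  "(1 / sqrt 3) *\<^sub>R (sv 2 + 2 *\<^sub>R sv 1) = P (sqrt 3/2) (1/2)"
  "(1 / sqrt 3) *\<^sub>R (sv 2 + 2 *\<^sub>R sv 3) = P (-sqrt 3/2) (-1/2)"
  "(1 / sqrt 3) *\<^sub>R (sv 3 + 2 *\<^sub>R sv 1) = P (sqrt 3/2) (-1/2)"
  "(1 / sqrt 3) *\<^sub>R (sv 3 + 2 *\<^sub>R sv 2) = P (-sqrt 3/2) (1/2)"
  by (simp_all add: sv_P field_simps)

lemma cardPV: "card PV = 6" unfolding PV_def by (simp add: s3f)
lemma cardPQ: "card PQ = 6" unfolding PQ_def by (simp add: s3f)
lemma disjPVQ: "PV \<inter> PQ = {}" unfolding PV_def PQ_def by (simp add: s3f)

lemma card_img: "card ((\<lambda>v. (v, f v)) ` A) = card A"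
  by (rule card_image) (auto intro: inj_onI)

lemma part_even:
  assumes "even d" "d \<ge> 6"
  shows "normalized_eigenpairs d =
              {(s *\<^sub>R sv k, 1 + 2 powr (1 - real d)) | s k. s \<in> {1, -1} \<and> k \<in> {1..3}}
              \<union> {((1 / sqrt 3) *\<^sub>R (sv k + 2 *\<^sub>R sv j), 3 powr (real d / 2) * 2 powr (1 - real d))
                  | k j. k \<in> {1..3} \<and> j \<in> {1..3} \<and> k \<noteq> j}
            \<and> card (normalized_eigenpairs d) = 12" (is "?A \<and> ?B")
proof
  have d0: "d > 0" using assms by auto
  show ?B
    unfolding LHS_even[OF assms] card_img using cardPV cardPQ disjPVQ
    by (simp add: card_Un_disjoint PV_def PQ_def)
  show ?A
    unfolding LHS_even[OF assms] set1[of "\<lambda>s k. (s *\<^sub>R sv k, 1 + 2 powr (1 - real d))"]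
      set2[of "\<lambda>k j. ((1 / sqrt 3) *\<^sub>R (sv k + 2 *\<^sub>R sv j), 3 powr (real d / 2) * 2 powr (1 - real d))"]
      w6
    unfolding PV_def PQ_def
    apply (simp add: lam_even[OF assms(1) d0, simplified] sv_P)
    apply (rule set_eqI)
    apply (simp only: insert_iff empty_iff Un_iff)
    apply blast
    done
qed

lemma part_odd:
  assumes "odd d" "d \<ge> 3"
  shows "normalized_eigenpairs d =
              {(sv k, 1 - 2 powr (1 - real d)) | k. k \<in> {1..3}}
              \<union> {(- sv k, - (1 - 2 powr (1 - real d))) | k. k \<in> {1..3}}
            \<and> card (normalized_eigenpairs d) = 6" (is "?A \<and> ?B")
proof
  show ?B
    unfolding LHS_odd[OF assms] card_img using cardPV by simp
  show ?A
    unfolding LHS_odd[OF assms] set3[of "\<lambda>k. (sv k, 1 - 2 powr (1 - real d))"]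
      set3[of "\<lambda>k. (- sv k, - (1 - 2 powr (1 - real d)))"]
    unfolding PV_def
    apply (simp add: lam_odd[OF assms(1), simplified] sv_P)
    apply (rule set_eqI)
    apply (simp only: insert_iff empty_iff Un_iff)
    apply blast
    done
qed

lemma sq_id: "s * s = (3::real) \<Longrightarrow> 4*x^2 + (-x + s*y)^2 + (-x - s*y)^2 = 6*(x^2+y^2)"
proof -
  assume h: "s * s = 3"
  have "4*x^2 + (-x + s*y)^2 + (-x - s*y)^2 = 6*x^2 + 2*(s * s)*y^2"
    by (simp add: power2_eq_square algebra_simps)
  then show ?thesis unfolding h by (simp add: algebra_simps)
qed

lemma q4_id: "s * s = (3::real) \<Longrightarrow> 16*x^4 + (-x + s*y)^4 + (-x - s*y)^4 = 18*(x^2+y^2)^2"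
proof -
  assume h: "s * s = 3"
  have "16*x^4 + (-x + s*y)^4 + (-x - s*y)^4 = 18*x^4 + 12*(s * s)*x^2*y^2 + 2*((s * s)*(s * s))*y^4"
    by (simp add: power2_eq_square power4_eq_xxxx algebra_simps)
  then show ?thesis unfolding h by (simp add: power2_eq_square power4_eq_xxxx algebra_simps)
qed

lemma bbB: "bb x y = (-x + sqrt 3 * y)/2" "cc x y = (-x - sqrt 3 * y)/2"
  unfolding bb_def cc_def by (simp_all add: field_simps)

lemma part_i2:
  assumes "norm v = 1" shows "is_eigenpair 2 v (3/2)"
proof -
  obtain x y where v: "v = P x y" using vec_P by blast
  have n: "x^2 + y^2 = 1" using assms unfolding v norm_P .
  have "x^2 + bb x y^2 + cc x y^2 = 3/2"
  proof -
    have "4*x^2 + (-x + sqrt 3*y)^2 + (-x - sqrt 3*y)^2 = 6*(x^2+y^2)" by (rule sq_id) simp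
    then show ?thesis unfolding bbB using n by (simp add: power_divide)
  qed
  moreover have "x^(2-1)*(cc x y - bb x y) + bb x y^(2-1)*(x - cc x y) + cc x y^(2-1)*(bb x y - x) = 0"
    by (simp add: algebra_simps)
  ultimately show ?thesis unfolding is_eigenpair_def v by (subst eig_iff[OF n]) simp_all
qed

lemma part_i4:
  assumes "norm v = 1" shows "is_eigenpair 4 v (9/8)"
proof -
  obtain x y where v: "v = P x y" using vec_P by blast
  have n: "x^2 + y^2 = 1" using assms unfolding v norm_P .
  have "x^4 + bb x y^4 + cc x y^4 = 9/8"
  proof -
    have "16*x^4 + (-x + sqrt 3*y)^4 + (-x - sqrt 3*y)^4 = 18*(x^2+y^2)^2" by (rule q4_id) simp
    then show ?thesis unfolding bbB using n by (simp add: power_divide)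
  qed
  moreover have "x^(4-1)*(cc x y - bb x y) + bb x y^(4-1)*(x - cc x y) + cc x y^(4-1)*(bb x y - x) = 0"
  proof -
    have sum0: "x + bb x y + cc x y = 0" unfolding bb_def cc_def by simp
    show ?thesis using S_eq[OF sum0, of 3] by (simp add: numeral_eq_Suc)
  qed
  ultimately show ?thesis unfolding is_eigenpair_def v by (subst eig_iff[OF n]) simp_all
qed

theorem mainTheorem8:
  shows "(\<forall>v :: real^2. norm v = 1 \<longrightarrow> is_eigenpair 2 v (3/2))
       \<and> (\<forall>v :: real^2. norm v = 1 \<longrightarrow> is_eigenpair 4 v (9/8))
       \<and> (\<forall>d::nat. even d \<and> d \<ge> 6 \<longrightarrow>
            normalized_eigenpairs d =
              {(s *\<^sub>R sv k, 1 + 2 powr (1 - real d)) | s k. s \<in> {1, -1} \<and> k \<in> {1..3}}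
              \<union> {((1 / sqrt 3) *\<^sub>R (sv k + 2 *\<^sub>R sv j), 3 powr (real d / 2) * 2 powr (1 - real d))
                  | k j. k \<in> {1..3} \<and> j \<in> {1..3} \<and> k \<noteq> j}
            \<and> card (normalized_eigenpairs d) = 12)
       \<and> (\<forall>d::nat. odd d \<and> d \<ge> 3 \<longrightarrow>
            normalized_eigenpairs d =
              {(sv k, 1 - 2 powr (1 - real d)) | k. k \<in> {1..3}}
              \<union> {(- sv k, - (1 - 2 powr (1 - real d))) | k. k \<in> {1..3}}
            \<and> card (normalized_eigenpairs d) = 6)"
  apply (intro conjI)
     apply (intro allI impI, erule part_i2)
    apply (intro allI impI, erule part_i4)
   apply (intro allI impI, erule conjE, erule (1) part_even)
  apply (intro allI impI, erule conjE, erule (1) part_odd)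
  done

end
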